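(* Among the $q^{TM}$ distinct assignments of the matrix $S\in\mathbb{F}(q)^{T\times M}$, at most a fraction $q^{-1}\binom{n}{k}TM$ of them induce a matrix $Q_A\cdot G$ of rank less than $M$ for some set $A\subset I_n$ with $|A|=n-k$. (Consequently, if $q>\binom{n}{k}TM$, there exists an assignment of $S$ for which $Q_A\cdot G$ has rank $M$ for every such $A$.)
   Context: Fix a balanced incomplete block design $(I_n,\mathcal{B})\in S_\lambda(2,r,n)$ (every element of $I_n=\{1,\dots,n\}$ lies in the same number of blocks, each block has $r$ elements, every pair of elements lies in exactly $\lambda$ blocks), with blocks $B_1,\dots,B_{N^*}$, where $N^*=\lambda n(n-1)/(r(r-1))$. For $A\subset I_n$ with $|A|=n-k$ define $T(A)=\sum_{B\in\mathcal{B}:|B\cap A|\ge 2}(|B\cap A|-1)$ and $T=\max_{A\subseteq I_n,|A|=n-k}T(A)$. Let $M=(r-1)N^*-T$. The $M$ information symbols form a vector $\vec d\in\mathbb{F}(q)^M$; with $S\in\mathbb{F}(q)^{T\times M}$ and $G=[I,S^t]^t$ (size $(r-1)N^*\times M$), the vector $G\vec d$ is written column-wise into an $(r-1)\times N^*$ matrix $D$. For each column $j$ a parity symbol $P_j=\sum_{i=1}^{r-1}D_{i,j}$ is formed, and the $r$ symbols $(D_{1,j},\dots,D_{r-1,j},P_j)$ (the $j$-th parity group) are stored one per disk on the disks of block $B_j$. Let $R=[I,\vec 1^t]^t$ be the $r\times(r-1)$ matrix consisting of the $(r-1)\times(r-1)$ identity with an all-ones row appended. For the set $A$ of inaccessible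 disks and each $j$: if $|B_j\cap A|\le 1$, let $R_j$ be $R$ with its last row set to zero; if $|B_j\cap A|\ge 2$, let $R_j$ be $R$ with only the rows corresponding to the symbols of parity group $j$ stored on disks in $B_j\setminus A$ kept and all other rows set to zero. Let $Q_A$ be the $(rN^* )\times(r-1)N^*$ block-diagonal matrix with diagonal blocks $R_1,\dots,R_{N^*}$. Then $Q_A G\vec d$ is the vector of information obtainable when disks in $A$ are inaccessible, so $\vec d$ is decodable iff $Q_A G$ has rank $M$. *)

theory Defs
  imports "Jordan_Normal_Form.DL_Rank"
begin

text \<open>A BIBD in S_lambda(2,r,n) on I_n = {1..n}; blocks B_1..B_N are the list entries
  Bs!0 .. Bs!(N-1) (repeated blocks allowed, each counted separately).\<close>
definition is_bibd :: "nat \<Rightarrow> nat \<Rightarrow> nat \<Rightarrow> nat set list \<Rightarrow> bool" where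
  "is_bibd lam r n Bs \<longleftrightarrow>
     (\<forall>B\<in>set Bs. B \<subseteq> {1..n} \<and> card B = r) \<and>
     (\<exists>c. \<forall>x\<in>{1..n}. card {j. j < length Bs \<and> x \<in> Bs!j} = c) \<and>
     (\<forall>x\<in>{1..n}. \<forall>y\<in>{1..n}. x \<noteq> y \<longrightarrow>
         card {j. j < length Bs \<and> x \<in> Bs!j \<and> y \<in> Bs!j} = lam)"

definition T_of :: "nat set list \<Rightarrow> nat set \<Rightarrow> nat" where
  "T_of Bs A = (\<Sum>j<length Bs. if card (Bs!j \<inter> A) \<ge> 2 then card (Bs!j \<inter> A) - 1 else 0)"

definition T_max :: "nat \<Rightarrow> nat \<Rightarrow> nat set list \<Rightarrow> nat" where
  "T_max n k Bs = Max {T_of Bs A | A. A \<subseteq> {1..n} \<and> card A = n - k}"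

text \<open>G = [I, S^t]^t of size L x M, where L = (r-1)N and S is T x M (T = L - M).\<close>
definition gen_mat :: "nat \<Rightarrow> nat \<Rightarrow> 'a::field mat \<Rightarrow> 'a mat" where
  "gen_mat L M S = mat L M (\<lambda>(i,j). if i < M then (if i = j then 1 else 0) else S $$ (i - M, j))"

text \<open>R = [I, 1^t]^t, r x (r-1).  Row a < r-1 corresponds to data symbol D_{a+1,j},
  row r-1 to the parity symbol P_j.\<close>
definition R_mat :: "nat \<Rightarrow> 'a::field mat" where
  "R_mat r = mat r (r - 1) (\<lambda>(a,b). if a < r - 1 then (if a = b then 1 else 0) else 1)"

text \<open>Placement: pl j a is the disk (an element of B_j) storing symbol a of parity group j.\<close>
definition R_j :: "nat \<Rightarrow> nat set list \<Rightarrow> (nat \<Rightarrow> nat \<Rightarrow> nat) \<Rightarrow> nat set \<Rightarrow> nat \<Rightarrow> 'a::field mat" where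
  "R_j r Bs pl A j = mat r (r - 1) (\<lambda>(a,b).
     if (if card (Bs!j \<inter> A) \<le> 1 then a < r - 1 else pl j a \<notin> A)
     then R_mat r $$ (a,b) else 0)"

text \<open>Q_A: block diagonal with blocks R_1..R_N, size rN x (r-1)N.  Symbol a of group j
  (i.e. D_{a+1,j}) sits at position j*(r-1)+a of G d (column-wise filling of D).\<close>
definition Q_mat :: "nat \<Rightarrow> nat set list \<Rightarrow> (nat \<Rightarrow> nat \<Rightarrow> nat) \<Rightarrow> nat set \<Rightarrow> 'a::field mat" where
  "Q_mat r Bs pl A = mat (r * length Bs) ((r - 1) * length Bs) (\<lambda>(i,c).
     if i div r = c div (r - 1) then R_j r Bs pl A (i div r) $$ (i mod r, c mod (r - 1)) else 0)"

end

theory Submission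
  imports Defs "HOL-Library.FuncSet"
begin


lemma card_carrier_mat:
  "finite (carrier_mat nr nc :: 'a::finite mat set) \<and>
   card (carrier_mat nr nc :: 'a mat set) = card (UNIV::'a set) ^ (nr*nc)"
proof -
  let ?D = "{..<nr}\<times>{..<nc}"
  let ?P = "PiE ?D (\<lambda>_. UNIV :: 'a set)"
  have eq: "carrier_mat nr nc = (\<lambda>f. mat nr nc f) ` ?P"
  proof
    show "carrier_mat nr nc \<subseteq> (\<lambda>f. mat nr nc f) ` ?P"
    proof
      fix S :: "'a mat" assume S: "S \<in> carrier_mat nr nc"
      have "S = mat nr nc (restrict (\<lambda>p. S $$ p) ?D)"
        using S by (intro eq_matI) auto
      moreover have "restrict (\<lambda>p. S $$ p) ?D \<in> ?P" by auto
      ultimately show "S \<in> (\<lambda>f. mat nr nc f) ` ?P" by blast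
    qed
  qed auto
  have inj: "inj_on (\<lambda>f. mat nr nc f) ?P"
  proof (rule inj_onI)
    fix f g assume f: "f \<in> ?P" and g: "g \<in> ?P" and e: "mat nr nc f = (mat nr nc g :: 'a mat)"
    show "f = g"
    proof (rule PiE_ext[OF f g])
      fix p assume "p \<in> ?D"
      then obtain i j where "p = (i,j)" "i < nr" "j < nc" by auto
      then show "f p = g p" using arg_cong[OF e, of "\<lambda>A. A $$ (i,j)"] by simp
    qed
  qed
  have "card ?P = card (UNIV::'a set) ^ (nr*nc)"
    by (simp add: card_PiE card_cartesian_product)
  then show ?thesis using eq inj card_image[OF inj] by (simp add: finite_PiE)
qed



lemma low_rank_kernel:
  fixes A :: "'a::field mat"
  assumes A: "A \<in> carrier_mat nr nc" and rk: "vec_space.rank nr A < nc"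
  shows "\<exists>v \<in> carrier_vec nc. v \<noteq> 0\<^sub>v nc \<and> A *\<^sub>v v = 0\<^sub>v nr"
proof (cases "distinct (cols A)")
  case True
  interpret vec_space "TYPE('a)" nr .
  have "\<not> lin_indpt (set (cols A))"
    using lin_indpt_full_rank[OF A True] rk by auto
  then obtain v where "v \<in> carrier_vec nc" "v \<noteq> 0\<^sub>v nc" "A *\<^sub>v v = 0\<^sub>v nr"
    using lin_depE[OF A _ True] by blast
  then show ?thesis by blast
next
  case False
  then obtain i j where ij: "i < length (cols A)" "j < length (cols A)" "i \<noteq> j" "cols A ! i = cols A ! j"
    by (metis distinct_conv_nth)
  then have ij2: "i < nc" "j < nc" "col A i = col A j" using A by auto
  define v :: "'a vec" where "v = vec nc (\<lambda>l. if l = i then 1 else if l = j then -1 else 0)"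
  have "v \<noteq> 0\<^sub>v nc"
  proof
    assume "v = 0\<^sub>v nc" then have "v $ i = 0" using ij2 by simp
    then show False using ij2 by (simp add: v_def)
  qed
  moreover have "A *\<^sub>v v = 0\<^sub>v nr"
  proof (rule eq_vecI)
    fix k assume "k < dim_vec (0\<^sub>v nr :: 'a vec)"
    then have k: "k < nr" by simp
    have "(A *\<^sub>v v) $ k = (\<Sum>l<nc. A $$ (k,l) * v $ l)"
      using A k by (simp add: mult_mat_vec_def scalar_prod_def v_def lessThan_atLeast0)
    also have "\<dots> = (\<Sum>l\<in>{i,j}. A $$ (k,l) * v $ l)"
      by (rule sum.mono_neutral_right) (use ij2 in \<open>auto simp: v_def\<close>)
    also have "\<dots> = A $$ (k,i) - A $$ (k,j)" using ij2 ij(3) by (simp add: v_def)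
    also have "\<dots> = 0" using arg_cong[OF ij2(3), of "\<lambda>c. c $ k"] ij2 A k by (simp add: col_def)
    finally show "(A *\<^sub>v v) $ k = 0\<^sub>v nr $ k" using k by simp
  qed (use A in auto)
  moreover have "v \<in> carrier_vec nc" by (simp add: v_def)
  ultimately show ?thesis by blast
qed



lemma Q_row:
  fixes v :: "'a::field vec"
  assumes r2: "r \<ge> 2" and j: "j < length Bs" and a: "a < r"
    and v: "v \<in> carrier_vec ((r-1)*length Bs)"
  shows "(Q_mat r Bs pl A *\<^sub>v v) $ (j*r + a)
       = (\<Sum>b<r-1. R_j r Bs pl A j $$ (a,b) * v $ (j*(r-1)+b))"
proof -
  let ?N = "length Bs"
  let ?L = "(r-1)*?N"
  have i: "j*r+a < r*?N"
  proof -
    have "j*r + a < j*r + r" using a by simp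
    also have "\<dots> = (j+1)*r" by simp
    also have "\<dots> \<le> ?N * r" using j by (intro mult_right_mono) auto
    finally show ?thesis by (simp add: mult.commute)
  qed
  have dv: "(j*r+a) div r = j" "(j*r+a) mod r = a" using a by auto
  define f where "f c = Q_mat r Bs pl A $$ (j*r+a, c) * v $ c" for c
  have "(Q_mat r Bs pl A *\<^sub>v v) $ (j*r + a) = (\<Sum>c<?L. f c)"
    using i v by (simp add: mult_mat_vec_def scalar_prod_def Q_mat_def f_def lessThan_atLeast0)
  also have "\<dots> = (\<Sum>c\<in>(\<lambda>b. j*(r-1)+b) ` {..<r-1}. f c)"
  proof (rule sum.mono_neutral_right)
    show "(\<lambda>b. j*(r-1)+b) ` {..<r-1} \<subseteq> {..<?L}"
    proof
      fix c assume "c \<in> (\<lambda>b. j*(r-1)+b) ` {..<r-1}"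
      then obtain b where b: "b < r-1" "c = j*(r-1)+b" by auto
      have "j*(r-1)+b < j*(r-1) + (r-1)" using b by simp
      also have "\<dots> = (j+1)*(r-1)" by simp
      also have "\<dots> \<le> ?N*(r-1)" using j by (intro mult_right_mono) auto
      finally show "c \<in> {..<?L}" using b by (simp add: mult.commute)
    qed
    show "\<forall>c\<in>{..<?L} - (\<lambda>b. j*(r-1)+b) ` {..<r-1}. f c = 0"
    proof
      fix c assume c: "c \<in> {..<?L} - (\<lambda>b. j*(r-1)+b) ` {..<r-1}"
      have "c div (r-1) \<noteq> j"
      proof
        assume h: "c div (r-1) = j"
        have "c = j*(r-1) + c mod (r-1)" using h by (metis div_mult_mod_eq mult.commute)
        moreover have "c mod (r-1) < r-1" using r2 by simp
        ultimately show False using c by blast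
      qed
      then show "f c = 0" using c i dv by (simp add: f_def Q_mat_def)
    qed
  qed auto
  also have "\<dots> = (\<Sum>b<r-1. f (j*(r-1)+b))"
    by (rule sum.reindex[unfolded comp_def]) (auto simp: inj_on_def)
  also have "\<dots> = (\<Sum>b<r-1. R_j r Bs pl A j $$ (a,b) * v $ (j*(r-1)+b))"
  proof (rule sum.cong)
    fix b assume b: "b \<in> {..<r-1}"
    have lt: "j*(r-1)+b < ?L"
    proof -
      have "j*(r-1)+b < j*(r-1) + (r-1)" using b by simp
      also have "\<dots> = (j+1)*(r-1)" by simp
      also have "\<dots> \<le> ?N*(r-1)" using j by (intro mult_right_mono) auto
      finally show ?thesis by (simp add: mult.commute)
    qed
    have "(j*(r-1)+b) div (r-1) = j" "(j*(r-1)+b) mod (r-1) = b" using b by auto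
    then show "f (j*(r-1)+b) = R_j r Bs pl A j $$ (a,b) * v $ (j*(r-1)+b)"
      using lt i dv by (simp add: f_def Q_mat_def)
  qed simp
  finally show ?thesis .
qed

lemma Q_row_data:
  fixes v :: "'a::field vec"
  assumes r2: "r \<ge> 2" and j: "j < length Bs" and a: "a < r - 1"
    and v: "v \<in> carrier_vec ((r-1)*length Bs)"
    and kept: "card (Bs!j \<inter> A) \<le> 1 \<or> pl j a \<notin> A"
  shows "(Q_mat r Bs pl A *\<^sub>v v) $ (j*r + a) = v $ (j*(r-1)+a)"
proof -
  have "(Q_mat r Bs pl A *\<^sub>v v) $ (j*r + a) = (\<Sum>b<r-1. R_j r Bs pl A j $$ (a,b) * v $ (j*(r-1)+b))"
    using Q_row[OF r2 j _ v] a by simp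
  also have "\<dots> = (\<Sum>b<r-1. (if b = a then v $ (j*(r-1)+b) else 0))"
    using a kept by (intro sum.cong) (auto simp: R_j_def R_mat_def)
  also have "\<dots> = v $ (j*(r-1)+a)" using a by simp
  finally show ?thesis .
qed

lemma Q_row_parity:
  fixes v :: "'a::field vec"
  assumes r2: "r \<ge> 2" and j: "j < length Bs"
    and v: "v \<in> carrier_vec ((r-1)*length Bs)"
    and kept: "card (Bs!j \<inter> A) \<ge> 2" "pl j (r-1) \<notin> A"
  shows "(Q_mat r Bs pl A *\<^sub>v v) $ (j*r + (r-1)) = (\<Sum>b<r-1. v $ (j*(r-1)+b))"
proof -
  have "(Q_mat r Bs pl A *\<^sub>v v) $ (j*r + (r-1)) = (\<Sum>b<r-1. R_j r Bs pl A j $$ (r-1,b) * v $ (j*(r-1)+b))"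
    using Q_row[OF r2 j _ v, of "r-1" pl A] r2 by simp
  also have "\<dots> = (\<Sum>b<r-1. v $ (j*(r-1)+b))"
    using r2 kept by (intro sum.cong) (auto simp: R_j_def R_mat_def)
  finally show ?thesis .
qed



definition lostD :: "nat \<Rightarrow> (nat \<Rightarrow> nat \<Rightarrow> nat) \<Rightarrow> nat set \<Rightarrow> nat \<Rightarrow> nat set" where
  "lostD r pl A j = {a. a < r - 1 \<and> pl j a \<in> A}"

definition Fj :: "nat \<Rightarrow> nat set list \<Rightarrow> (nat \<Rightarrow> nat \<Rightarrow> nat) \<Rightarrow> nat set \<Rightarrow> nat \<Rightarrow> nat set" where
  "Fj r Bs pl A j = (if card (Bs!j \<inter> A) \<le> 1 then {}
      else if pl j (r-1) \<in> A then lostD r pl A j else lostD r pl A j - {Max (lostD r pl A j)})"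

definition Fset :: "nat \<Rightarrow> nat set list \<Rightarrow> (nat \<Rightarrow> nat \<Rightarrow> nat) \<Rightarrow> nat set \<Rightarrow> nat set" where
  "Fset r Bs pl A = (\<Union>j<length Bs. (\<lambda>b. j*(r-1)+b) ` Fj r Bs pl A j)"

lemma finite_Fset: "finite (Fset r Bs pl A)"
proof -
  have "Fj r Bs pl A j \<subseteq> {..<r-1}" for j by (auto simp: Fj_def lostD_def)
  then have "finite (Fj r Bs pl A j)" for j by (meson finite_lessThan finite_subset)
  then show ?thesis by (auto simp: Fset_def)
qed

lemma determ:
  fixes v w :: "'a::field vec"
  assumes r2: "r \<ge> 2"
    and v: "v \<in> carrier_vec ((r-1)*length Bs)" and w: "w \<in> carrier_vec ((r-1)*length Bs)"
    and Qe: "Q_mat r Bs pl A *\<^sub>v v = Q_mat r Bs pl A *\<^sub>v w"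
    and Fe: "\<forall>i\<in>Fset r Bs pl A. v $ i = w $ i"
  shows "v = w"
proof (rule eq_vecI)
  show "dim_vec v = dim_vec w" using v w by simp
  fix c assume "c < dim_vec w"
  then have c: "c < (r-1)*length Bs" using w by simp
  define j where "j = c div (r-1)"
  define b where "b = c mod (r-1)"
  have cjb: "c = j*(r-1)+b" unfolding j_def b_def by (metis div_mult_mod_eq)
  have j: "j < length Bs" unfolding j_def using c r2
    by (simp add: div_less_iff_less_mult mult.commute)
  have b: "b < r-1" unfolding b_def using r2 by simp
  have E1: "v $ (j*(r-1)+b') = w $ (j*(r-1)+b')"
    if "b' < r-1" "card (Bs!j \<inter> A) \<le> 1 \<or> pl j b' \<notin> A" for b'
    using Q_row_data[where pl=pl and A=A, OF r2 j that(1) v that(2)]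
      Q_row_data[where pl=pl and A=A, OF r2 j that(1) w that(2)] Qe by metis
  have E2: "v $ (j*(r-1)+b') = w $ (j*(r-1)+b')" if "b' \<in> Fj r Bs pl A j" for b'
    using Fe that j unfolding Fset_def by blast
  show "v $ c = w $ c"
  proof (cases "card (Bs!j \<inter> A) \<le> 1 \<or> pl j b \<notin> A")
    case True then show ?thesis using E1 b cjb by simp
  next
    case False
    show ?thesis
    proof (cases "b \<in> Fj r Bs pl A j")
      case True then show ?thesis using E2 cjb by simp
    next
      case nF: False
      have par: "pl j (r-1) \<notin> A" and bM: "b = Max (lostD r pl A j)"
        using False nF b by (auto simp: Fj_def lostD_def split: if_splits)
      have c2: "card (Bs!j \<inter> A) \<ge> 2" using False by simp
      have "(\<Sum>b'<r-1. v $ (j*(r-1)+b')) = (\<Sum>b'<r-1. w $ (j*(r-1)+b'))"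
        using Q_row_parity[where pl=pl, OF r2 j v c2 par] Q_row_parity[where pl=pl, OF r2 j w c2 par] Qe by metis
      moreover have "(\<Sum>b'\<in>{..<r-1} - {b}. v $ (j*(r-1)+b')) = (\<Sum>b'\<in>{..<r-1} - {b}. w $ (j*(r-1)+b'))"
      proof (rule sum.cong)
        fix b' assume b': "b' \<in> {..<r-1} - {b}"
        show "v $ (j*(r-1)+b') = w $ (j*(r-1)+b')"
        proof (cases "pl j b' \<in> A")
          case True
          then have "b' \<in> Fj r Bs pl A j" using b' c2 par bM by (auto simp: Fj_def lostD_def)
          then show ?thesis using E2 by blast
        next
          case False then show ?thesis using E1 b' by blast
        qed
      qed simp
      moreover have "(\<Sum>b'<r-1. v $ (j*(r-1)+b')) = v $ (j*(r-1)+b) + (\<Sum>b'\<in>{..<r-1} - {b}. v $ (j*(r-1)+b'))"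
        using b by (intro sum.remove) auto
      moreover have "(\<Sum>b'<r-1. w $ (j*(r-1)+b')) = w $ (j*(r-1)+b) + (\<Sum>b'\<in>{..<r-1} - {b}. w $ (j*(r-1)+b'))"
        using b by (intro sum.remove) auto
      ultimately have "v $ (j*(r-1)+b) = w $ (j*(r-1)+b)"
        by simp
      then show ?thesis using cjb by simp
    qed
  qed
qed

lemma card_Fj:
  assumes bij: "bij_betw (pl j) {..<r} (Bs!j)" and r2: "r \<ge> 2"
  shows "card (Fj r Bs pl A j) \<le> (if card (Bs!j \<inter> A) \<ge> 2 then card (Bs!j \<inter> A) - 1 else 0)"
proof -
  let ?c = "card (Bs!j \<inter> A)"
  have "Bs!j \<inter> A = pl j ` {a. a < r \<and> pl j a \<in> A}"
    using bij by (auto simp: bij_betw_def)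
  moreover have "inj_on (pl j) {a. a < r \<and> pl j a \<in> A}"
    using bij by (auto simp: bij_betw_def inj_on_def)
  ultimately have c1: "?c = card {a. a < r \<and> pl j a \<in> A}" by (simp add: card_image)
  have split: "{a. a < r \<and> pl j a \<in> A} = lostD r pl A j \<union> (if pl j (r-1) \<in> A then {r-1} else {})"
  proof (rule Set.set_eqI)
    fix x show "x \<in> {a. a < r \<and> pl j a \<in> A} \<longleftrightarrow> x \<in> lostD r pl A j \<union> (if pl j (r-1) \<in> A then {r-1} else {})"
      using r2 by (cases "x = r-1") (auto simp: lostD_def)
  qed
  have fin: "finite (lostD r pl A j)" by (auto simp: lostD_def)
  have c2: "?c = card (lostD r pl A j) + (if pl j (r-1) \<in> A then 1 else 0)"
    unfolding c1 split using fin by (auto simp: lostD_def card_insert_if)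
  show ?thesis
  proof (cases "?c \<le> 1")
    case True then show ?thesis by (simp add: Fj_def)
  next
    case False
    show ?thesis
    proof (cases "pl j (r-1) \<in> A")
      case True then show ?thesis using False c2 by (simp add: Fj_def)
    next
      case par: False
      then have "card (lostD r pl A j) = ?c" using c2 by simp
      then have "lostD r pl A j \<noteq> {}" using False by auto
      then have "Max (lostD r pl A j) \<in> lostD r pl A j" using fin by simp
      then show ?thesis using False par c2 fin by (simp add: Fj_def card_Diff_singleton)
    qed
  qed
qed

lemma card_Fset:
  assumes placement: "\<forall>j < length Bs. bij_betw (pl j) {..<r} (Bs!j)" and r2: "r \<ge> 2"
  shows "card (Fset r Bs pl A) \<le> T_of Bs A"
proof -
  have "card (Fset r Bs pl A) \<le> (\<Sum>j<length Bs. card ((\<lambda>b. j*(r-1)+b) ` Fj r Bs pl A j))"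
    unfolding Fset_def by (rule card_UN_le) simp
  also have "\<dots> \<le> (\<Sum>j<length Bs. card (Fj r Bs pl A j))"
    by (intro sum_mono card_image_le) (auto simp: Fj_def lostD_def)
  also have "\<dots> \<le> T_of Bs A"
    unfolding T_of_def by (intro sum_mono) (use card_Fj placement r2 in auto)
  finally show ?thesis .
qed

lemma card_kernel:
  assumes placement: "\<forall>j < length Bs. bij_betw (pl j) {..<r} (Bs!j)" and r2: "r \<ge> 2"
  shows "card {v :: 'a::{finite,field} vec. v \<in> carrier_vec ((r-1)*length Bs) \<and>
            Q_mat r Bs pl A *\<^sub>v v = 0\<^sub>v (r*length Bs)} \<le> card (UNIV :: 'a set) ^ T_of Bs A"
proof -
  let ?K = "{v :: 'a vec. v \<in> carrier_vec ((r-1)*length Bs) \<and> Q_mat r Bs pl A *\<^sub>v v = 0\<^sub>v (r*length Bs)}"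
  let ?F = "Fset r Bs pl A"
  let ?P = "PiE ?F (\<lambda>_. UNIV :: 'a set)"
  have "card ?K \<le> card ?P"
  proof (rule card_inj_on_le)
    show "inj_on (\<lambda>v. restrict (\<lambda>i. v $ i) ?F) ?K"
    proof (rule inj_onI)
      fix v w assume "v \<in> ?K" "w \<in> ?K" and e: "restrict (\<lambda>i. v $ i) ?F = restrict (\<lambda>i. w $ i) ?F"
      have "\<forall>i\<in>?F. v $ i = w $ i"
      proof
        fix i assume "i \<in> ?F"
        then show "v $ i = w $ i" using fun_cong[OF e, of i] by simp
      qed
      with \<open>v \<in> ?K\<close> \<open>w \<in> ?K\<close> show "v = w"
        using determ[OF r2, of v Bs w pl A] by simp
    qed
    show "(\<lambda>v. restrict (\<lambda>i. v $ i) ?F) ` ?K \<subseteq> ?P" by auto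
    show "finite ?P" using finite_Fset by (simp add: finite_PiE)
  qed
  also have "\<dots> = card (UNIV :: 'a set) ^ card ?F" using finite_Fset by (simp add: card_PiE)
  also have "\<dots> \<le> card (UNIV :: 'a set) ^ T_of Bs A"
    by (rule power_increasing[OF card_Fset[OF placement r2]]) (simp add: Suc_le_eq card_gt_0_iff)
  finally show ?thesis .
qed



lemma finite_carrier_vec: "finite (carrier_vec n :: 'a::finite vec set)"
proof (rule inj_on_finite)
  show "inj_on (\<lambda>v. restrict (\<lambda>i. v $ i) {..<n}) (carrier_vec n :: 'a vec set)"
  proof (rule inj_onI)
    fix v w :: "'a vec" assume "v \<in> carrier_vec n" "w \<in> carrier_vec n"
      and e: "restrict (\<lambda>i. v $ i) {..<n} = restrict (\<lambda>i. w $ i) {..<n}"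
    show "v = w"
    proof (rule eq_vecI)
      fix i assume "i < dim_vec w"
      then show "v $ i = w $ i" using fun_cong[OF e, of i] \<open>w \<in> carrier_vec n\<close> by simp
    qed (use \<open>v \<in> carrier_vec n\<close> \<open>w \<in> carrier_vec n\<close> in simp)
  qed
  show "(\<lambda>v. restrict (\<lambda>i. v $ i) {..<n}) ` carrier_vec n \<subseteq> PiE {..<n} (\<lambda>_. UNIV :: 'a set)"
    by (intro image_subsetI) (simp add: restrict_PiE_iff)
  show "finite (PiE {..<n} (\<lambda>_. UNIV :: 'a set))" by (simp add: finite_PiE)
qed

lemma gen_mat_top:
  fixes S :: "'a::field mat"
  assumes "y \<in> carrier_vec Mc" "j < Mc" "Mc \<le> L"
  shows "(gen_mat L Mc S *\<^sub>v y) $ j = y $ j"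
proof -
  have "(gen_mat L Mc S *\<^sub>v y) $ j = (\<Sum>l<Mc. (if j = l then 1 else 0) * y $ l)"
    using assms by (simp add: mult_mat_vec_def scalar_prod_def gen_mat_def lessThan_atLeast0)
  also have "\<dots> = (\<Sum>l<Mc. if l = j then y $ l else 0)" by (intro sum.cong) auto
  also have "\<dots> = y $ j" using assms(2) by simp
  finally show ?thesis .
qed

lemma gen_mat_bot:
  fixes S :: "'a::field mat"
  assumes "y \<in> carrier_vec Mc" "t < Tc"
  shows "(gen_mat (Mc+Tc) Mc S *\<^sub>v y) $ (Mc+t) = (\<Sum>l<Mc. S $$ (t,l) * y $ l)"
  using assms by (simp add: mult_mat_vec_def scalar_prod_def gen_mat_def lessThan_atLeast0)

lemma bad_count:
  fixes Q :: "'a::{finite,field} mat"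
  assumes Q: "Q \<in> carrier_mat m (Mc + Tc)"
    and Kc: "card {v. v \<in> carrier_vec (Mc+Tc) \<and> Q *\<^sub>v v = 0\<^sub>v m} \<le> card (UNIV::'a set) ^ Tc"
  shows "card (UNIV::'a set) * card {S. S \<in> carrier_mat Tc Mc \<and>
            vec_space.rank m (Q * gen_mat (Mc+Tc) Mc S) < Mc} \<le> Tc * Mc * card (UNIV::'a set) ^ (Tc*Mc)"
proof -
  define q where "q = card (UNIV::'a set)"
  define L where "L = Mc + Tc"
  have q2: "q \<ge> 2"
  proof -
    have "{0::'a, 1} \<subseteq> UNIV" by simp
    then have "card {0::'a,1} \<le> q" unfolding q_def by (intro card_mono) auto
    then show ?thesis by simp
  qed
  define K where "K = {v. v \<in> carrier_vec L \<and> Q *\<^sub>v v = 0\<^sub>v m}"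
  have finK: "finite K" unfolding K_def using finite_carrier_vec[of L]
    by (rule rev_finite_subset) auto
  have KcK: "card K \<le> q ^ Tc" using Kc unfolding K_def L_def q_def .
  define slice where "slice i = {v\<in>K. (\<forall>j<i. v $ j = 0) \<and> v $ i = 1}" for i
  define Sol where "Sol (v::'a vec) = {S :: 'a mat. S \<in> carrier_mat Tc Mc \<and> gen_mat L Mc S *\<^sub>v vec Mc (\<lambda>j. v $ j) = v}" for v
  define bad where "bad = {S :: 'a mat. S \<in> carrier_mat Tc Mc \<and> vec_space.rank m (Q * gen_mat (Mc+Tc) Mc S) < Mc}"
  have finC: "finite (carrier_mat Tc Mc :: 'a mat set)"
    using card_carrier_mat by blast
  have step1: "bad \<subseteq> (\<Union>i<Mc. \<Union>v\<in>slice i. Sol v)"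
  proof
    fix S assume "S \<in> bad"
    then have S: "S \<in> carrier_mat Tc Mc" and rk: "vec_space.rank m (Q * gen_mat L Mc S) < Mc"
      unfolding bad_def L_def by auto
    define G where "G = gen_mat L Mc S"
    have G: "G \<in> carrier_mat L Mc" by (simp add: G_def gen_mat_def)
    have QG: "Q * G \<in> carrier_mat m Mc" using Q G unfolding L_def by auto
    obtain x where x: "x \<in> carrier_vec Mc" "x \<noteq> 0\<^sub>v Mc" "(Q * G) *\<^sub>v x = 0\<^sub>v m"
      using low_rank_kernel[OF QG] rk unfolding G_def by blast
    have "\<exists>i<Mc. x $ i \<noteq> 0"
    proof (rule ccontr)
      assume "\<not> ?thesis"
      then have "x = 0\<^sub>v Mc" using x(1) by (intro eq_vecI) auto
      then show False using x(2) by simp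
    qed
    then obtain i0 where "i0 < Mc" "x $ i0 \<noteq> 0" by blast
    define i where "i = (LEAST i. x $ i \<noteq> 0)"
    have xi: "x $ i \<noteq> 0" unfolding i_def by (rule LeastI) (fact \<open>x $ i0 \<noteq> 0\<close>)
    have iM: "i < Mc" using Least_le[of "\<lambda>i. x $ i \<noteq> 0" i0] \<open>x $ i0 \<noteq> 0\<close> \<open>i0 < Mc\<close>
      unfolding i_def by linarith
    have xj: "x $ j = 0" if "j < i" for j using not_less_Least[of j "\<lambda>i. x $ i \<noteq> 0"] that
      unfolding i_def by blast
    define x' where "x' = (1 / x $ i) \<cdot>\<^sub>v x"
    have x': "x' \<in> carrier_vec Mc" using x(1) by (simp add: x'_def)
    define v where "v = G *\<^sub>v x'"
    have vL: "v \<in> carrier_vec L" using G x' by (simp add: v_def)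
    have top: "v $ j = x' $ j" if "j < Mc" for j
      using gen_mat_top[OF x' that, of L S] that unfolding v_def G_def L_def by simp
    have "Q *\<^sub>v v = (Q * G) *\<^sub>v x'" using Q G x' unfolding v_def L_def by simp
    also have "\<dots> = (1 / x $ i) \<cdot>\<^sub>v ((Q * G) *\<^sub>v x)" unfolding x'_def
      by (rule mult_mat_vec[OF QG x(1)])
    also have "\<dots> = 0\<^sub>v m" using x(3) by (intro eq_vecI) auto
    finally have "v \<in> K" using vL unfolding K_def by simp
    moreover have "\<forall>j<i. v $ j = 0" using top xj iM x(1) by (simp add: x'_def)
    moreover have "v $ i = 1" using top iM xi x(1) by (simp add: x'_def)
    ultimately have "v \<in> slice i" unfolding slice_def by simp
    moreover have "vec Mc (\<lambda>j. v $ j) = x'"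
      using top x' by (intro eq_vecI) auto
    then have "S \<in> Sol v" using S unfolding Sol_def G_def v_def by simp
    ultimately show "S \<in> (\<Union>i<Mc. \<Union>v\<in>slice i. Sol v)" using iM by blast
  qed
  have step2: "card (Sol v) \<le> q ^ (Tc * (Mc - 1))" if iM: "i < Mc" and vi: "v $ i = 1" for i v
  proof -
    define x where "x = vec Mc (\<lambda>j. v $ j)"
    have x: "x \<in> carrier_vec Mc" by (simp add: x_def)
    define D where "D = {..<Tc} \<times> ({..<Mc} - {i})"
    have eqn: "v $ (Mc+t) = (\<Sum>l<Mc. S $$ (t,l) * x $ l)" if "S \<in> Sol v" "t < Tc" for S t
    proof -
      have "v $ (Mc+t) = (gen_mat (Mc+Tc) Mc S *\<^sub>v x) $ (Mc+t)"
        using that(1) unfolding Sol_def x_def L_def by simp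
      then show ?thesis using gen_mat_bot[OF x that(2)] by simp
    qed
    have "card (Sol v) \<le> card (PiE D (\<lambda>_. UNIV :: 'a set))"
    proof (rule card_inj_on_le)
      show "inj_on (\<lambda>S. restrict (\<lambda>p. S $$ p) D) (Sol v)"
      proof (rule inj_onI)
        fix S S' assume S: "S \<in> Sol v" and S': "S' \<in> Sol v"
          and e: "restrict (\<lambda>p. S $$ p) D = restrict (\<lambda>p. S' $$ p) D"
        have agree: "S $$ (t,l) = S' $$ (t,l)" if "t < Tc" "l < Mc" "l \<noteq> i" for t l
          using fun_cong[OF e, of "(t,l)"] that by (simp add: D_def)
        have split: "(\<Sum>l<Mc. T $$ (t,l) * x $ l) = T $$ (t,i) + (\<Sum>l\<in>{..<Mc} - {i}. T $$ (t,l) * x $ l)"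
          for T :: "'a mat" and t
        proof -
          have "(\<Sum>l<Mc. T $$ (t,l) * x $ l) = T $$ (t,i) * x $ i + (\<Sum>l\<in>{..<Mc} - {i}. T $$ (t,l) * x $ l)"
            using iM by (intro sum.remove) auto
          then show ?thesis using iM vi by (simp add: x_def)
        qed
        have coli: "S $$ (t,i) = S' $$ (t,i)" if "t < Tc" for t
        proof -
          have "(\<Sum>l\<in>{..<Mc} - {i}. S $$ (t,l) * x $ l) = (\<Sum>l\<in>{..<Mc} - {i}. S' $$ (t,l) * x $ l)"
            using agree that by (intro sum.cong) auto
          moreover have "(\<Sum>l<Mc. S $$ (t,l) * x $ l) = (\<Sum>l<Mc. S' $$ (t,l) * x $ l)"
            using eqn[OF S that] eqn[OF S' that] by simp
          ultimately show ?thesis using split[of S t] split[of S' t] by simp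
        qed
        show "S = S'"
        proof (rule eq_matI)
          fix t l assume "t < dim_row S'" "l < dim_col S'"
          then have "t < Tc" "l < Mc" using S' unfolding Sol_def by auto
          then show "S $$ (t,l) = S' $$ (t,l)" using agree coli by (cases "l = i") auto
        qed (use S S' in \<open>auto simp: Sol_def\<close>)
      qed
      show "(\<lambda>S. restrict (\<lambda>p. S $$ p) D) ` Sol v \<subseteq> PiE D (\<lambda>_. UNIV)" by auto
      show "finite (PiE D (\<lambda>_. UNIV :: 'a set))" by (simp add: finite_PiE D_def)
    qed
    also have "\<dots> = q ^ (Tc * (Mc - 1))"
      using iM by (simp add: card_PiE D_def card_cartesian_product q_def)
    finally show ?thesis .
  qed
  have step3: "q * card (slice i) \<le> card K" if iM: "i < Mc" for i
  proof (cases "slice i = {}")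
    case True then show ?thesis by simp
  next
    case False
    then obtain v0 where v0: "v0 \<in> slice i" by blast
    have v0K: "v0 \<in> carrier_vec L" "Q *\<^sub>v v0 = 0\<^sub>v m" "v0 $ i = 1"
      using v0 unfolding slice_def K_def by auto
    have iL: "i < L" using iM unfolding L_def by simp
    define \<phi> where "\<phi> p = (snd p - v0) + fst p \<cdot>\<^sub>v v0" for p :: "'a \<times> 'a vec"
    have "card ((UNIV :: 'a set) \<times> slice i) \<le> card K"
    proof (rule card_inj_on_le)
      show "inj_on \<phi> (UNIV \<times> slice i)"
      proof (rule inj_onI)
        fix p p' assume p: "p \<in> UNIV \<times> slice i" and p': "p' \<in> UNIV \<times> slice i" and e: "\<phi> p = \<phi> p'"
        obtain a v where av: "p = (a,v)" by (cases p)
        obtain a' v' where av': "p' = (a',v')" by (cases p')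
        have v: "v \<in> carrier_vec L" "v $ i = 1" using p av unfolding slice_def K_def by auto
        have v': "v' \<in> carrier_vec L" "v' $ i = 1" using p' av' unfolding slice_def K_def by auto
        have comp: "(v $ c - v0 $ c) + a * v0 $ c = (v' $ c - v0 $ c) + a' * v0 $ c" if "c < L" for c
          using arg_cong[OF e, of "\<lambda>u. u $ c"] that v v' v0K unfolding \<phi>_def av av' by simp
        have "a = a'" using comp[OF iL] v v' v0K by simp
        moreover have "v = v'"
        proof (rule eq_vecI)
          fix c assume "c < dim_vec v'" then have "c < L" using v' by simp
          then show "v $ c = v' $ c" using comp \<open>a = a'\<close> by fastforce
        qed (use v v' in simp)
        ultimately show "p = p'" using av av' by simp
      qed
      show "\<phi> ` (UNIV \<times> slice i) \<subseteq> K"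
      proof
        fix u assume "u \<in> \<phi> ` (UNIV \<times> slice i)"
        then obtain a v where v: "v \<in> slice i" and u: "u = (v - v0) + a \<cdot>\<^sub>v v0" unfolding \<phi>_def by auto
        have vK: "v \<in> carrier_vec L" "Q *\<^sub>v v = 0\<^sub>v m" using v unfolding slice_def K_def by auto
        have QL: "Q \<in> carrier_mat m L" using Q unfolding L_def .
        have uc: "u \<in> carrier_vec L" using vK v0K u by simp
        have "Q *\<^sub>v u = Q *\<^sub>v (v - v0) + Q *\<^sub>v (a \<cdot>\<^sub>v v0)"
          unfolding u by (rule mult_add_distrib_mat_vec[OF QL]) (use vK v0K in auto)
        also have "\<dots> = (Q *\<^sub>v v - Q *\<^sub>v v0) + a \<cdot>\<^sub>v (Q *\<^sub>v v0)"
          using mult_minus_distrib_mat_vec[OF QL vK(1) v0K(1)] mult_mat_vec[OF QL v0K(1)] by simp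
        also have "\<dots> = 0\<^sub>v m" using vK v0K by (intro eq_vecI) auto
        finally show "u \<in> K" using uc unfolding K_def by simp
      qed
    qed (rule finK)
    then show ?thesis by (simp add: card_cartesian_product q_def)
  qed
  have finS: "finite (slice i)" for i using finK unfolding slice_def by simp
  have "card bad \<le> card (\<Union>i<Mc. \<Union>v\<in>slice i. Sol v)"
  proof (rule card_mono)
    show "finite (\<Union>i<Mc. \<Union>v\<in>slice i. Sol v)"
      by (rule finite_subset[OF _ finC]) (auto simp: Sol_def)
  qed (rule step1)
  also have "\<dots> \<le> (\<Sum>i<Mc. card (\<Union>v\<in>slice i. Sol v))" by (rule card_UN_le) simp
  also have "\<dots> \<le> (\<Sum>i<Mc. (\<Sum>v\<in>slice i. card (Sol v)))"
    by (intro sum_mono card_UN_le finS)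
  also have "\<dots> \<le> (\<Sum>i<Mc. card (slice i) * q ^ (Tc * (Mc - 1)))"
  proof (intro sum_mono)
    fix i assume "i \<in> {..<Mc}"
    then have "\<forall>v\<in>slice i. card (Sol v) \<le> q ^ (Tc * (Mc - 1))"
      using step2 unfolding slice_def by auto
    then show "(\<Sum>v\<in>slice i. card (Sol v)) \<le> card (slice i) * q ^ (Tc * (Mc - 1))"
      using sum_bounded_above[of "slice i" "\<lambda>v. card (Sol v)"] by auto
  qed
  finally have cb: "card bad \<le> (\<Sum>i<Mc. card (slice i) * q ^ (Tc * (Mc - 1)))" .
  show ?thesis
  proof (cases "Tc = 0")
    case True
    have "card (slice i) = 0" if "i < Mc" for i
      using step3[OF that] KcK True q2 by (cases "card (slice i)") auto
    then have "card bad = 0" using cb by simp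
    then show ?thesis unfolding bad_def q_def by simp
  next
    case False
    have "q * card bad \<le> (\<Sum>i<Mc. q * card (slice i) * q ^ (Tc * (Mc - 1)))"
      using mult_left_mono[OF cb, of q] by (simp add: sum_distrib_left mult.assoc)
    also have "\<dots> \<le> (\<Sum>i<Mc. q ^ Tc * q ^ (Tc * (Mc - 1)))"
      using step3 KcK by (intro sum_mono mult_right_mono) (auto intro: order_trans)
    also have "\<dots> = Mc * q ^ (Tc * Mc)"
    proof (cases Mc)
      case 0 then show ?thesis by simp
    next
      case (Suc k) then show ?thesis by (simp add: power_add[symmetric] algebra_simps)
    qed
    also have "\<dots> \<le> Tc * Mc * q ^ (Tc * Mc)" using False by simp
    finally show ?thesis unfolding bad_def q_def L_def .
  qed
qed



theorem mainTheorem4: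
  fixes lam r n k :: nat and Bs :: "nat set list" and pl :: "nat \<Rightarrow> nat \<Rightarrow> nat"
  assumes design: "is_bibd lam r n Bs"
    and kn: "k \<le> n"
    and placement: "\<forall>j < length Bs. bij_betw (pl j) {..<r} (Bs!j)"
  defines "N \<equiv> length Bs"
    and "T \<equiv> T_max n k Bs"
    and "M \<equiv> (r - 1) * length Bs - T_max n k Bs"
    and "q \<equiv> card (UNIV :: 'a set)"
  shows "real (card {S :: 'a::{finite,field} mat. S \<in> carrier_mat T M \<and>
            (\<exists>A. A \<subseteq> {1..n} \<and> card A = n - k \<and>
               vec_space.rank (r * N) (Q_mat r Bs pl A * gen_mat ((r - 1) * N) M S) < M)})
         \<le> (real (n choose k) * real T * real M / real q) * real q ^ (T * M)
       \<and> (real q > real (n choose k) * real T * real M \<longrightarrow>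
           (\<exists>S :: 'a mat. S \<in> carrier_mat T M \<and>
              (\<forall>A. A \<subseteq> {1..n} \<and> card A = n - k \<longrightarrow>
                 vec_space.rank (r * N) (Q_mat r Bs pl A * gen_mat ((r - 1) * N) M S) = M)))"
proof -
  define AA where "AA = {A. A \<subseteq> {1..n} \<and> card A = n - k}"
  define bad where "bad = {S :: 'a mat. S \<in> carrier_mat T M \<and>
            (\<exists>A. A \<subseteq> {1..n} \<and> card A = n - k \<and>
               vec_space.rank (r * N) (Q_mat r Bs pl A * gen_mat ((r - 1) * N) M S) < M)}"
  define badA where "badA A = {S :: 'a mat. S \<in> carrier_mat T M \<and>
               vec_space.rank (r * N) (Q_mat r Bs pl A * gen_mat ((r - 1) * N) M S) < M}" for A
  have q2: "q \<ge> 2"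
  proof -
    have "{0::'a, 1} \<subseteq> UNIV" by simp
    then have "card {0::'a,1} \<le> q" unfolding q_def by (intro card_mono) auto
    then show ?thesis by simp
  qed
  have cardC: "finite (carrier_mat T M :: 'a mat set)" "card (carrier_mat T M :: 'a mat set) = q ^ (T*M)"
    using card_carrier_mat unfolding q_def by blast+
  have finAA: "finite AA" unfolding AA_def by (rule finite_subset[of _ "Pow {1..n}"]) auto
  have cardAA: "card AA = n choose k"
    unfolding AA_def using n_subsets[of "{1..n}" "n-k"] binomial_symmetric[OF kn] by simp
  have bad_eq: "bad = (\<Union>A\<in>AA. badA A)" unfolding bad_def badA_def AA_def by auto
  have rank_le: "vec_space.rank (r * N) (Q_mat r Bs pl A * gen_mat ((r - 1) * N) M S) \<le> M" for A and S :: "'a mat"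
  proof -
    have "Q_mat r Bs pl A * gen_mat ((r - 1) * N) M S \<in> carrier_mat (r*N) M"
      by (rule mult_carrier_mat[of _ _ "(r-1)*N"]) (simp_all add: Q_mat_def gen_mat_def N_def)
    then show ?thesis by (rule vec_space.rank_le_nc)
  qed
  have key: "q * card bad \<le> (n choose k) * T * M * q ^ (T*M)"
  proof (cases "M = 0")
    case True
    then have "bad = {}" unfolding bad_def by auto
    then show ?thesis by simp
  next
    case False
    then have TL: "(r-1)*N = M + T" unfolding M_def T_def N_def by simp
    then have "(r-1)*N > 0" using False by simp
    then have "r - 1 > 0" by simp
    then have r2: "r \<ge> 2" by simp
    have "q * card (badA A) \<le> T * M * q ^ (T*M)" if A: "A \<in> AA" for A
    proof -
      have finT: "finite {T_of Bs A | A. A \<subseteq> {1..n} \<and> card A = n - k}"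
        using finAA unfolding AA_def by (simp add: setcompr_eq_image)
      have TA: "T_of Bs A \<le> T" unfolding T_def T_max_def
        by (rule Max_ge[OF finT]) (use A in \<open>auto simp: AA_def\<close>)
      have "card {v :: 'a vec. v \<in> carrier_vec ((r-1)*length Bs) \<and>
            Q_mat r Bs pl A *\<^sub>v v = 0\<^sub>v (r*length Bs)} \<le> q ^ T_of Bs A"
        using card_kernel[OF placement r2] unfolding q_def by blast
      also have "\<dots> \<le> q ^ T" using TA q2 by (intro power_increasing) auto
      finally have Kc: "card {v :: 'a vec. v \<in> carrier_vec (M+T) \<and>
            Q_mat r Bs pl A *\<^sub>v v = 0\<^sub>v (r*N)} \<le> card (UNIV :: 'a set) ^ T"
        using TL unfolding q_def N_def by simp
      have Qc: "(Q_mat r Bs pl A :: 'a mat) \<in> carrier_mat (r*N) (M+T)"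
        using TL unfolding N_def by (simp add: Q_mat_def)
      from bad_count[OF Qc Kc] show ?thesis
        unfolding badA_def q_def TL by (simp add: mult.commute)
    qed
    then have "(\<Sum>A\<in>AA. q * card (badA A)) \<le> (\<Sum>A\<in>AA. T * M * q ^ (T*M))"
      by (rule sum_mono)
    moreover have "card bad \<le> (\<Sum>A\<in>AA. card (badA A))"
      unfolding bad_eq by (rule card_UN_le[OF finAA])
    ultimately have "q * card bad \<le> card AA * (T * M * q ^ (T*M))"
      by (simp add: sum_distrib_left[symmetric]) (metis mult_le_mono2 order_trans)
    then show ?thesis using cardAA by (simp add: mult.assoc)
  qed
  have qpos: "real q > 0" using q2 by simp
  have part1: "real (card bad) \<le> (real (n choose k) * real T * real M / real q) * real q ^ (T * M)"
  proof -
    have "real q * real (card bad) \<le> real (n choose k) * real T * real M * real q ^ (T*M)"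
      using key by (metis of_nat_le_iff of_nat_mult of_nat_power)
    then show ?thesis using qpos by (simp add: field_simps)
  qed
  have part2: "\<exists>S :: 'a mat. S \<in> carrier_mat T M \<and>
              (\<forall>A. A \<subseteq> {1..n} \<and> card A = n - k \<longrightarrow>
                 vec_space.rank (r * N) (Q_mat r Bs pl A * gen_mat ((r - 1) * N) M S) = M)"
    if big: "real q > real (n choose k) * real T * real M"
  proof -
    have "(n choose k) * T * M < q" using big by (metis of_nat_less_iff of_nat_mult)
    then have "(n choose k) * T * M * q ^ (T*M) < q * q ^ (T*M)"
      using q2 by (intro mult_strict_right_mono) auto
    with key have "q * card bad < q * q ^ (T*M)" by (rule le_less_trans)
    then have "card bad < q ^ (T*M)" by simp
    then have "\<not> carrier_mat T M \<subseteq> bad"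
      using card_mono[OF _ ] cardC bad_def
      by (metis (no_types, lifting) card_mono finite_subset leD mem_Collect_eq subsetI)
    then obtain S where S: "S \<in> carrier_mat T M" "S \<notin> bad" by blast
    show ?thesis
    proof (intro exI[of _ S] conjI allI impI)
      show "S \<in> carrier_mat T M" by (rule S(1))
      fix A assume "A \<subseteq> {1..n} \<and> card A = n - k"
      then have "\<not> vec_space.rank (r * N) (Q_mat r Bs pl A * gen_mat ((r - 1) * N) M S) < M"
        using S unfolding bad_def by blast
      then show "vec_space.rank (r * N) (Q_mat r Bs pl A * gen_mat ((r - 1) * N) M S) = M"
        using rank_le[of A S] by linarith
    qed
  qed
  show ?thesis using part1 part2 unfolding bad_def by blast
qed


end
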